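(* Fix $t\in[H]$ and $u>0$. Let $\mathcal D_2$ consist of $l$ i.i.d. episodes from behavior policy $\mu$, and let $V_{t+1},V^{\rm in}_{t+1}:\mathcal S\to\mathbb R$ be fixed (not depending on $\mathcal D_2$) with $\|V_{t+1}-V^{\rm in}_{t+1}\|_\infty\le2u$. Let $f(s,a)=4u\sqrt{\log(2HSA/\delta)/(l\,d^\mu_t(s,a))}$, let $n'_{t,s,a}$ be the number of episodes in $\mathcal D_2$ with $(s_t,a_t)=(s,a)$, and define \[ g_t(s,a)=\begin{cases}P_t(\cdot|s,a)^\top[V_{t+1}-V^{\rm in}_{t+1}]-f(s,a),& n'_{t,s,a}<\frac12l\,d^\mu_t(s,a),\\ \frac1{n'_{t,s,a}}\sum_{j=1}^l[V_{t+1}(s'^{(j)}_{t+1})-V^{\rm in}_{t+1}(s'^{(j)}_{t+1})]\mathbf 1[s'^{(j)}_t=s,a'^{(j)}_t=a]-f(s,a),&\text{otherwise.}\end{cases} \] Then with probability at least $1-\delta/H$, for all $(s,a)$ with $d^\mu_t(s,a)>0$, \[ 0\le P_t(\cdot|s,a)^\top[V_{t+1}-V^{\rm in}_{t+1}]-g_t(s,a)\le8u\sqrt{\frac{\log(2HSA/\delta)}{l\,d^\mu_t(s,a)}}. \]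
   Context: Finite-horizon tabular MDP with $S$ states, $A$ actions, horizon $H$, transitions $P_t$; episodes generated as $s_1\sim d_1$, $a_t\sim\mu_t(\cdot|s_t)$, $s_{t+1}\sim P_t(\cdot|s_t,a_t)$; $(s'^{(j)}_t,a'^{(j)}_t)$ denote the data of the $j$-th episode of $\mathcal D_2$. $d^\mu_t(s,a)=\mathbb P^\mu(s_t=s,a_t=a)$. $\delta\in(0,1)$. *)

theory Defs
  imports "HOL-Probability.Probability"
begin

text \<open>Time steps are 1-based. Episode list index i holds (s_(i+1), a_(i+1)).
  rollout mu P t k s: starting at time t in state s, generate k (state,action) pairs.\<close>

fun rollout :: "(nat \<Rightarrow> 's \<Rightarrow> 'a pmf) \<Rightarrow> (nat \<Rightarrow> 's \<Rightarrow> 'a \<Rightarrow> 's pmf)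
    \<Rightarrow> nat \<Rightarrow> nat \<Rightarrow> 's \<Rightarrow> ('s \<times> 'a) list pmf" where
  "rollout mu P t 0 s = return_pmf []"
| "rollout mu P t (Suc k) s =
     do { a \<leftarrow> mu t s; s' \<leftarrow> P t s a; rest \<leftarrow> rollout mu P (Suc t) k s';
          return_pmf ((s, a) # rest) }"

text \<open>One episode of horizon H under behaviour policy mu; we record (s_t,a_t) for t=1..H+1
  (so that s_(H+1) is available; the extra action a_(H+1) is irrelevant).\<close>
definition episode :: "'s pmf \<Rightarrow> (nat \<Rightarrow> 's \<Rightarrow> 'a pmf) \<Rightarrow> (nat \<Rightarrow> 's \<Rightarrow> 'a \<Rightarrow> 's pmf)
    \<Rightarrow> nat \<Rightarrow> ('s \<times> 'a) list pmf" where
  "episode d1 mu P H = do { s \<leftarrow> d1; rollout mu P 1 (Suc H) s }"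

definition state_at :: "('s \<times> 'a) list \<Rightarrow> nat \<Rightarrow> 's" where
  "state_at ep t = fst (ep ! (t - 1))"

definition action_at :: "('s \<times> 'a) list \<Rightarrow> nat \<Rightarrow> 'a" where
  "action_at ep t = snd (ep ! (t - 1))"

definition occ :: "'s pmf \<Rightarrow> (nat \<Rightarrow> 's \<Rightarrow> 'a pmf) \<Rightarrow> (nat \<Rightarrow> 's \<Rightarrow> 'a \<Rightarrow> 's pmf)
    \<Rightarrow> nat \<Rightarrow> nat \<Rightarrow> 's \<Rightarrow> 'a \<Rightarrow> real" where
  "occ d1 mu P H t s a =
     measure_pmf.prob (episode d1 mu P H) {ep. state_at ep t = s \<and> action_at ep t = a}"

definition Pexp :: "(nat \<Rightarrow> 's \<Rightarrow> 'a \<Rightarrow> 's pmf) \<Rightarrow> nat \<Rightarrow> 's \<Rightarrow> 'a \<Rightarrow> ('s::finite \<Rightarrow> real) \<Rightarrow> real" where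
  "Pexp P t s a W = (\<Sum>s'\<in>UNIV. pmf (P t s a) s' * W s')"

definition visit_count :: "('s \<times> 'a) list list \<Rightarrow> nat \<Rightarrow> 's \<Rightarrow> 'a \<Rightarrow> nat" where
  "visit_count D t s a = length (filter (\<lambda>ep. state_at ep t = s \<and> action_at ep t = a) D)"

end

theory Submission
  imports Defs
begin


lemma replicate_Pi:
  "replicate_pmf l p = map_pmf (\<lambda>f. map f [0..<l]) (Pi_pmf {..<l} dflt (\<lambda>_. p))"
proof (induction l)
  case 0
  then show ?case by simp
next
  case (Suc l)
  have "replicate_pmf (Suc l) p = replicate_pmf (l + 1) p" by simp
  also have "\<dots> = do {xs \<leftarrow> replicate_pmf l p; y \<leftarrow> p; return_pmf (xs @ [y])}"
    by (subst replicate_pmf_distrib) (simp add: bind_assoc_pmf bind_return_pmf)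
  also have "\<dots> = do {y \<leftarrow> p; xs \<leftarrow> replicate_pmf l p; return_pmf (xs @ [y])}"
    by (rule bind_commute_pmf)
  also have "\<dots> = do {y \<leftarrow> p; f \<leftarrow> Pi_pmf {..<l} dflt (\<lambda>_. p); return_pmf (map f [0..<l] @ [y])}"
    by (simp add: Suc bind_map_pmf)
  also have "\<dots> = map_pmf (\<lambda>f. map f [0..<Suc l]) (Pi_pmf (insert l {..<l}) dflt (\<lambda>_. p))"
    by (subst Pi_pmf_insert') (auto simp: map_bind_pmf intro!: bind_pmf_cong)
  also have "insert l {..<l} = {..<Suc l}" by auto
  finally show ?case .
qed

lemma rollout_hd:
  "map_pmf (\<lambda>ep. fst (ep ! 0)) (rollout mu P t (Suc k) s) = return_pmf s"
proof -
  have "map_pmf (\<lambda>ep. fst (ep ! 0)) (rollout mu P t (Suc k) s) = map_pmf (\<lambda>_. s) (rollout mu P t (Suc k) s)"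
    by (rule map_pmf_cong) auto
  then show ?thesis by simp
qed

lemma rollout_pair:
  "i + 1 < k \<Longrightarrow> map_pmf (\<lambda>ep. (ep ! i, fst (ep ! (i + 1)))) (rollout mu P t0 k s) =
     bind_pmf (map_pmf (\<lambda>ep. ep ! i) (rollout mu P t0 k s))
       (\<lambda>p. map_pmf (\<lambda>s'. (p, s')) (P (t0 + i) (fst p) (snd p)))"
proof (induction i arbitrary: t0 k s)
  case 0
  then obtain k' where k: "k = Suc (Suc k')" by (cases k; cases "k - 1") auto
  have e: "map_pmf (\<lambda>ep. fst (ep ! 0)) (rollout mu P (Suc t0) (Suc k') s') = return_pmf s'" for s'
    by (rule rollout_hd)
  have e2: "map_pmf (\<lambda>rest. ((s, a), fst (rest ! 0))) (rollout mu P (Suc t0) (Suc k') s') = return_pmf ((s,a), s')" for a s'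
  proof -
    have "map_pmf (\<lambda>rest. ((s, a), fst (rest ! 0))) (rollout mu P (Suc t0) (Suc k') s') =
      map_pmf (Pair (s,a)) (map_pmf (\<lambda>ep. fst (ep ! 0)) (rollout mu P (Suc t0) (Suc k') s'))"
      by (simp add: pmf.map_comp o_def)
    then show ?thesis using e[of s'] by simp
  qed
  show ?case unfolding k
    apply (simp add: map_bind_pmf bind_map_pmf bind_assoc_pmf bind_return_pmf del: rollout.simps(2))
    apply (simp add: map_bind_pmf bind_return_pmf bind_assoc_pmf)
    apply (simp add: map_pmf_def[symmetric] e2)
    done
next
  case (Suc i)
  then obtain k' where k: "k = Suc k'" and ik: "i + 1 < k'" by (cases k) auto
  show ?case unfolding k
    apply (simp add: map_bind_pmf bind_assoc_pmf bind_return_pmf)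
    apply (simp add: map_pmf_def[symmetric] Suc.IH[OF ik, simplified] bind_map_pmf)
    done
qed

lemma episode_markov:
  assumes "1 \<le> t" "t \<le> H"
  shows "map_pmf (\<lambda>ep. if state_at ep t = s \<and> action_at ep t = a then Some (state_at ep (t+1)) else None)
           (episode d1 mu P H)
       = bind_pmf (map_pmf (\<lambda>ep. ep ! (t-1)) (episode d1 mu P H))
           (\<lambda>p. if p = (s,a) then map_pmf Some (P t s a) else return_pmf None)"
proof -
  let ?h = "\<lambda>(p, s'). if p = (s,a) then Some s' else None"
  have 1: "(\<lambda>ep. if state_at ep t = s \<and> action_at ep t = a then Some (state_at ep (t+1)) else None)
     = ?h \<circ> (\<lambda>ep. (ep ! (t-1), fst (ep ! (t - 1 + 1))))"
    using assms by (auto simp: fun_eq_iff state_at_def action_at_def prod_eq_iff)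
  have 2: "map_pmf (\<lambda>ep. (ep ! (t-1), fst (ep ! (t - 1 + 1)))) (rollout mu P 1 (Suc H) s0) =
     bind_pmf (map_pmf (\<lambda>ep. ep ! (t-1)) (rollout mu P 1 (Suc H) s0))
       (\<lambda>p. map_pmf (\<lambda>s'. (p, s')) (P t (fst p) (snd p)))" for s0
    using rollout_pair[of "t-1" "Suc H" mu P 1 s0] assms by simp
  have 3: "map_pmf ?h (map_pmf (\<lambda>s'. (p, s')) (P t (fst p) (snd p))) =
      (if p = (s,a) then map_pmf Some (P t s a) else return_pmf None)" for p
    by (auto simp: pmf.map_comp o_def)
  show ?thesis
    unfolding 1 episode_def pmf.map_comp[symmetric] map_bind_pmf bind_assoc_pmf
  proof (rule bind_pmf_cong[OF refl])
    fix s0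
    show "map_pmf ?h (map_pmf (\<lambda>ep. (ep ! (t-1), fst (ep ! (t - 1 + 1)))) (rollout mu P 1 (Suc H) s0)) =
      bind_pmf (map_pmf (\<lambda>ep. ep ! (t-1)) (rollout mu P 1 (Suc H) s0))
           (\<lambda>p. if p = (s,a) then map_pmf Some (P t s a) else return_pmf None)"
      unfolding 2 map_bind_pmf 3 ..
  qed
qed



lemma core:
  fixes Pd :: "'s::finite pmf" and W :: "'s \<Rightarrow> real" and \<rho> :: "nat \<Rightarrow> 'b"
  assumes W: "\<And>x. \<bar>W x\<bar> \<le> B" and Bpos: "B > 0" and T: "T > 0" and eps: "\<epsilon> \<ge> 0"
  defines "m \<equiv> (\<Sum>x\<in>UNIV. pmf Pd x * W x)"
  shows "measure_pmf.prob (Pi_pmf {..<l} z0 (\<lambda>j. if \<rho> j = c then map_pmf Some Pd else return_pmf None))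
     {Z. \<not> (real (card {j\<in>{..<l}. Z j \<noteq> None}) < T) \<and>
         \<epsilon> \<le> \<bar>1 / real (card {j\<in>{..<l}. Z j \<noteq> None}) * (\<Sum>j<l. case Z j of None \<Rightarrow> 0 | Some x \<Rightarrow> W x) - m\<bar>}
     \<le> 2 * exp (- (T * \<epsilon>\<^sup>2) / (2 * B\<^sup>2))" (is "measure_pmf.prob ?Q ?Bad \<le> _")
proof -
  define q where "q = (\<lambda>j. if \<rho> j = c then map_pmf Some Pd else return_pmf None)"
  define Q where "Q = Pi_pmf {..<l} z0 q"
  have QQ: "?Q = Q" by (simp add: Q_def q_def)
  define I where "I = {j\<in>{..<l}. \<rho> j = c}"
  define n where "n = card I"
  define X where "X = (\<lambda>j (Z::nat \<Rightarrow> 's option). case Z j of None \<Rightarrow> 0 | Some x \<Rightarrow> W x)"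
  have finI: "finite I" by (simp add: I_def)
  have setQ: "\<And>j. j < l \<Longrightarrow> (Z j = None \<longleftrightarrow> j \<notin> I)" if "Z \<in> set_pmf Q" for Z
  proof -
    fix j assume j: "j < l"
    have "Z \<in> PiE_dflt {..<l} z0 (set_pmf \<circ> q)"
      using set_Pi_pmf_subset'[of "{..<l}" z0 q] that by (auto simp: Q_def)
    then have "Z j \<in> set_pmf (q j)" using j by (auto simp: PiE_dflt_def)
    then show "Z j = None \<longleftrightarrow> j \<notin> I" using j by (auto simp: q_def I_def split: if_splits)
  qed
  have cardeq: "{j\<in>{..<l}. Z j \<noteq> None} = I" if "Z \<in> set_pmf Q" for Z
    using setQ[OF that] by (auto simp: I_def) (metis option.distinct(1))
  have sumeq: "(\<Sum>j<l. X j Z) = (\<Sum>j\<in>I. X j Z)" if "Z \<in> set_pmf Q" for Z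
  proof (rule sum.mono_neutral_right)
    show "I \<subseteq> {..<l}" by (auto simp: I_def)
    show "\<forall>i\<in>{..<l} - I. X i Z = 0" using setQ[OF that] by (auto simp: X_def split: option.splits) (metis option.distinct(1))
  qed simp
  have "measure_pmf.prob Q ?Bad = measure_pmf.prob Q (?Bad \<inter> set_pmf Q)"
    by (simp add: measure_Int_set_pmf)
  also have "\<dots> \<le> 2 * exp (- (T * \<epsilon>\<^sup>2) / (2 * B\<^sup>2))"
  proof (cases "real n < T")
    case True
    then have "?Bad \<inter> set_pmf Q = {}" using cardeq by (auto simp: n_def)
    then show ?thesis by simp
  next
    case False
    then have npos: "real n > 0" using T by linarith
    then have Ine: "I \<noteq> {}" by (auto simp: n_def)
    have sub: "?Bad \<inter> set_pmf Q \<subseteq> {Z \<in> space (measure_pmf Q). real n * \<epsilon> \<le> \<bar>(\<Sum>j\<in>I. X j Z) - real n * m\<bar>}"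
    proof safe
      fix Z assume Z: "Z \<in> set_pmf Q" and e: "\<epsilon> \<le> \<bar>1 / real (card {j \<in> {..<l}. Z j \<noteq> None}) *
        (\<Sum>j<l. case Z j of None \<Rightarrow> 0 | Some x \<Rightarrow> W x) - m\<bar>"
      have e2: "\<epsilon> \<le> \<bar>1 / real n * (\<Sum>j\<in>I. X j Z) - m\<bar>"
        using e cardeq[OF Z] sumeq[OF Z] by (simp add: n_def X_def)
      have "\<bar>1 / real n * (\<Sum>j\<in>I. X j Z) - m\<bar> = \<bar>(\<Sum>j\<in>I. X j Z) - real n * m\<bar> / real n"
        using npos by (simp add: field_simps abs_div_pos flip: abs_divide)
      with e2 npos show "real n * \<epsilon> \<le> \<bar>(\<Sum>j\<in>I. X j Z) - real n * m\<bar>"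
        by (simp add: pos_le_divide_eq mult.commute)
    qed simp
    have expX: "measure_pmf.expectation Q (X j) = m" if j: "j \<in> I" for j
    proof -
      have jl: "j < l" "\<rho> j = c" using j by (auto simp: I_def)
      have "measure_pmf.expectation Q (X j) = measure_pmf.expectation (map_pmf (\<lambda>Z. Z j) Q) (\<lambda>z. case z of None \<Rightarrow> 0 | Some x \<Rightarrow> W x)"
        by (simp add: X_def)
      also have "map_pmf (\<lambda>Z. Z j) Q = map_pmf Some Pd"
        unfolding Q_def using jl by (subst Pi_pmf_component) (auto simp: q_def)
      also have "measure_pmf.expectation (map_pmf Some Pd) (\<lambda>z. case z of None \<Rightarrow> 0 | Some x \<Rightarrow> W x)
          = measure_pmf.expectation Pd W" by simp
      also have "\<dots> = m" unfolding m_def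
        by (subst integral_measure_pmf_real[where A=UNIV]) (auto simp: mult.commute)
      finally show ?thesis .
    qed
    interpret H: Hoeffding_ineq "measure_pmf Q" I X "\<lambda>_. -B" "\<lambda>_. B" "real n * m"
    proof unfold_locales
      show "finite I" by (rule finI)
      have "prob_space.indep_vars (measure_pmf Q) (\<lambda>_. count_space UNIV) (\<lambda>x f. f x) {..<l}"
        unfolding Q_def by (rule indep_vars_Pi_pmf) simp
      then have "prob_space.indep_vars (measure_pmf Q) (\<lambda>_. count_space UNIV) (\<lambda>x f. f x) I"
        by (rule prob_space.indep_vars_subset[OF measure_pmf.prob_space_axioms]) (auto simp: I_def)
      then show "prob_space.indep_vars (measure_pmf Q) (\<lambda>_. borel) X I"
        unfolding X_def
        by (rule prob_space.indep_vars_compose2[OF measure_pmf.prob_space_axioms, where Y="\<lambda>_ z. case z of None \<Rightarrow> 0 | Some x \<Rightarrow> W x"]) simp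
      show "AE x in measure_pmf Q. X i x \<in> {- B..B}" for i
        using W[unfolded abs_le_iff] Bpos by (auto simp: X_def split: option.splits intro!: AE_I2) (metis minus_le_iff)
      show "real n * m \<equiv> \<Sum>i\<in>I. measure_pmf.expectation Q (X i)"
        using expX by (simp add: n_def)
    qed
    have pos: "(\<Sum>i\<in>I. (B - - B)\<^sup>2) > 0"
      using Bpos Ine finI by (intro sum_pos) auto
    have "measure_pmf.prob Q (?Bad \<inter> set_pmf Q) \<le>
        measure_pmf.prob Q {Z \<in> space (measure_pmf Q). real n * \<epsilon> \<le> \<bar>(\<Sum>j\<in>I. X j Z) - real n * m\<bar>}"
      by (rule measure_pmf.finite_measure_mono[OF sub]) simp
    also have "\<dots> \<le> 2 * exp (- 2 * (real n * \<epsilon>)\<^sup>2 / (\<Sum>i\<in>I. (B - - B)\<^sup>2))"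
      using H.Hoeffding_ineq_abs_ge[OF _ pos, of "real n * \<epsilon>"] eps by simp
    also have "(\<Sum>i\<in>I. (B - - B)\<^sup>2) = real n * (4 * B\<^sup>2)"
      by (simp add: n_def power2_eq_square algebra_simps)
    also have "- 2 * (real n * \<epsilon>)\<^sup>2 / (real n * (4 * B\<^sup>2)) = - (real n * \<epsilon>\<^sup>2) / (2 * B\<^sup>2)"
      using npos Bpos by (simp add: field_simps power2_eq_square)
    also have "2 * exp (- (real n * \<epsilon>\<^sup>2) / (2 * B\<^sup>2)) \<le> 2 * exp (- (T * \<epsilon>\<^sup>2) / (2 * B\<^sup>2))"
    proof -
      have "T * \<epsilon>\<^sup>2 \<le> real n * \<epsilon>\<^sup>2" using False by (intro mult_right_mono) auto
      then have "- (real n * \<epsilon>\<^sup>2) / (2 * B\<^sup>2) \<le> - (T * \<epsilon>\<^sup>2) / (2 * B\<^sup>2)"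
        using Bpos by (intro divide_right_mono) auto
      then show ?thesis by simp
    qed
    finally show ?thesis .
  qed
  finally show ?thesis by (simp add: QQ)
qed



lemma bad_bound:
  fixes d1 :: "'s::finite pmf" and mu :: "nat \<Rightarrow> 's \<Rightarrow> 'a pmf"
    and P :: "nat \<Rightarrow> 's \<Rightarrow> 'a \<Rightarrow> 's pmf" and W :: "'s \<Rightarrow> real"
  assumes t: "1 \<le> t" "t \<le> H" and W: "\<And>x. \<bar>W x\<bar> \<le> B" and Bpos: "B > 0" and T: "T > 0" and eps: "\<epsilon> \<ge> 0"
  shows "measure_pmf.prob (replicate_pmf l (episode d1 mu P H))
     {D. \<not> (real (visit_count D t s a) < T) \<and>
        \<epsilon> \<le> \<bar>1 / real (visit_count D t s a) *
                  (\<Sum>j<l. W (state_at (D ! j) (t + 1)) *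
                     (if state_at (D ! j) t = s \<and> action_at (D ! j) t = a then 1 else 0))
           - Pexp P t s a W\<bar>}
     \<le> 2 * exp (- (T * \<epsilon>\<^sup>2) / (2 * B\<^sup>2))"
proof -
  define E where "E = episode d1 mu P H"
  obtain dflt :: "('s \<times> 'a) list" where True by simp
  define \<phi> where "\<phi> = (\<lambda>ep. if state_at ep t = s \<and> action_at ep t = a then Some (state_at ep (t+1)) else None)"
  define Bad where "Bad = {Z :: nat \<Rightarrow> 's option. \<not> (real (card {j\<in>{..<l}. Z j \<noteq> None}) < T) \<and>
         \<epsilon> \<le> \<bar>1 / real (card {j\<in>{..<l}. Z j \<noteq> None}) * (\<Sum>j<l. case Z j of None \<Rightarrow> 0 | Some x \<Rightarrow> W x)
            - Pexp P t s a W\<bar>}"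
  define R where "R = map_pmf (\<lambda>ep. ep ! (t-1)) E"
  define q where "q = (\<lambda>p. if p = (s,a) then map_pmf Some (P t s a) else return_pmf None)"
  let ?BadD = "{D. \<not> (real (visit_count D t s a) < T) \<and>
        \<epsilon> \<le> \<bar>1 / real (visit_count D t s a) *
                  (\<Sum>j<l. W (state_at (D ! j) (t + 1)) *
                     (if state_at (D ! j) t = s \<and> action_at (D ! j) t = a then 1 else 0))
           - Pexp P t s a W\<bar>}"
  have vc: "visit_count (map F [0..<l]) t s a = card {j\<in>{..<l}. (\<phi> \<circ> F) j \<noteq> None}" for F
    unfolding visit_count_def length_filter_conv_card by (auto simp: \<phi>_def intro!: arg_cong[where f=card])
  have sm: "(\<Sum>j<l. W (state_at (F j) (Suc t)) *
                     (if state_at (F j) t = s \<and> action_at (F j) t = a then 1 else 0))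
         = (\<Sum>j<l. case (\<phi> \<circ> F) j of None \<Rightarrow> 0 | Some x \<Rightarrow> W x)" for F
    by (rule sum.cong) (auto simp: \<phi>_def)
  have pre: "(\<lambda>F. map F [0..<l]) -` ?BadD = (\<lambda>F. \<phi> \<circ> F) -` Bad"
    unfolding Bad_def by (auto simp: vc sm)
  have "measure_pmf.prob (replicate_pmf l E) ?BadD
      = measure_pmf.prob (Pi_pmf {..<l} dflt (\<lambda>_. E)) ((\<lambda>F. \<phi> \<circ> F) -` Bad)"
    by (simp only: replicate_Pi[where dflt=dflt] measure_map_pmf pre)
  also have "\<dots> = measure_pmf.prob (Pi_pmf {..<l} (\<phi> dflt) (\<lambda>_. map_pmf \<phi> E)) Bad"
    by (subst Pi_pmf_map[of "{..<l}" \<phi> dflt]) auto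
  also have "map_pmf \<phi> E = bind_pmf R q"
    unfolding \<phi>_def E_def R_def q_def by (rule episode_markov[OF t])
  also have "Pi_pmf {..<l} (\<phi> dflt) (\<lambda>_. bind_pmf R q) =
      bind_pmf (Pi_pmf {..<l} (s,a) (\<lambda>_. R)) (\<lambda>\<rho>. Pi_pmf {..<l} (\<phi> dflt) (\<lambda>j. q (\<rho> j)))"
    by (rule Pi_pmf_bind) simp
  also have "measure_pmf.prob \<dots> Bad \<le> 2 * exp (- (T * \<epsilon>\<^sup>2) / (2 * B\<^sup>2))"
  proof -
    have each: "measure_pmf.prob (Pi_pmf {..<l} (\<phi> dflt) (\<lambda>j. q (\<rho> j))) Bad \<le> 2 * exp (- (T * \<epsilon>\<^sup>2) / (2 * B\<^sup>2))" for \<rho>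
      unfolding q_def Bad_def Pexp_def
      by (rule core[OF W Bpos T eps])
    have "emeasure (measure_pmf (bind_pmf (Pi_pmf {..<l} (s,a) (\<lambda>_. R)) (\<lambda>\<rho>. Pi_pmf {..<l} (\<phi> dflt) (\<lambda>j. q (\<rho> j))))) Bad
       = (\<integral>\<^sup>+\<rho>. emeasure (measure_pmf (Pi_pmf {..<l} (\<phi> dflt) (\<lambda>j. q (\<rho> j)))) Bad \<partial>measure_pmf (Pi_pmf {..<l} (s,a) (\<lambda>_. R)))"
      by simp
    also have "\<dots> \<le> (\<integral>\<^sup>+\<rho>. ennreal (2 * exp (- (T * \<epsilon>\<^sup>2) / (2 * B\<^sup>2))) \<partial>measure_pmf (Pi_pmf {..<l} (s,a) (\<lambda>_. R)))"
      by (intro nn_integral_mono, simp only: measure_pmf.emeasure_eq_measure, rule ennreal_leI, rule each)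
    also have "\<dots> = ennreal (2 * exp (- (T * \<epsilon>\<^sup>2) / (2 * B\<^sup>2)))"
      by (simp add: measure_pmf.emeasure_space_1)
    finally show ?thesis
      by (simp add: measure_pmf.emeasure_eq_measure)
  qed
  finally show ?thesis by (simp add: E_def)
qed



theorem lemmaB4:
  fixes d1 :: "'s::finite pmf"
    and mu :: "nat \<Rightarrow> 's \<Rightarrow> 'a::finite pmf"
    and P :: "nat \<Rightarrow> 's \<Rightarrow> 'a \<Rightarrow> 's pmf"
    and H t l :: nat and u \<delta> :: real
    and V Vin :: "'s \<Rightarrow> real"
  assumes "t \<in> {1..H}" and "u > 0" and "0 < \<delta>" and "\<delta> < 1" and "l > 0"
    and "\<forall>s. \<bar>V s - Vin s\<bar> \<le> 2 * u"
  defines "d \<equiv> occ d1 mu P H t"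
    and "L \<equiv> ln (2 * real H * real CARD('s) * real CARD('a) / \<delta>)"
  defines "f \<equiv> (\<lambda>s a. 4 * u * sqrt (L / (real l * d s a)))"
  defines "g \<equiv> (\<lambda>D s a.
           if real (visit_count D t s a) < 1/2 * real l * d s a
           then Pexp P t s a (\<lambda>x. V x - Vin x) - f s a
           else 1 / real (visit_count D t s a) *
                  (\<Sum>j<l. (V (state_at (D ! j) (t + 1)) - Vin (state_at (D ! j) (t + 1))) *
                     (if state_at (D ! j) t = s \<and> action_at (D ! j) t = a then 1 else 0))
                - f s a)"
  shows "measure_pmf.prob (replicate_pmf l (episode d1 mu P H))
           {D. \<forall>s a. d s a > 0 \<longrightarrow>
                 0 \<le> Pexp P t s a (\<lambda>x. V x - Vin x) - g D s a \<and>
                 Pexp P t s a (\<lambda>x. V x - Vin x) - g D s a \<le> 8 * u * sqrt (L / (real l * d s a))}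
         \<ge> 1 - \<delta> / real H"
proof -
  have t: "1 \<le> t" "t \<le> H" using assms(1) by auto
  have Hpos: "real H > 0" using t by simp
  have u: "u > 0" and dl: "0 < \<delta>" "\<delta> < 1" and lpos: "real l > 0" using assms by auto
  define N where "N = real H * real CARD('s) * real CARD('a)"
  have Npos: "N \<ge> 1"
  proof -
    have "1 \<le> H * CARD('s) * CARD('a)"
      using t by (simp add: Suc_le_eq)
    then show ?thesis unfolding N_def by (metis of_nat_1 of_nat_le_iff of_nat_mult)
  qed
  have Lpos: "L > 0" unfolding L_def
  proof -
    have "1 < 2 * N / \<delta>" using Npos dl by (simp add: field_simps)
    then show "0 < ln (2 * real H * real CARD('s) * real CARD('a) / \<delta>)" by (simp add: N_def mult.assoc)
  qed
  have expL: "2 * exp (- L) = \<delta> / N"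
  proof -
    have pos: "2 * N / \<delta> > 0" using Npos dl by simp
    have "exp (- L) = 1 / (2 * N / \<delta>)" unfolding L_def N_def
      using pos by (simp add: exp_minus N_def mult.assoc)
    then show ?thesis using dl Npos by (simp add: field_simps)
  qed
  let ?PE = "\<lambda>s a. Pexp P t s a (\<lambda>x. V x - Vin x)"
  let ?emp = "\<lambda>D s a. 1 / real (visit_count D t s a) *
                  (\<Sum>j<l. (V (state_at (D ! j) (t + 1)) - Vin (state_at (D ! j) (t + 1))) *
                     (if state_at (D ! j) t = s \<and> action_at (D ! j) t = a then 1 else 0))"
  define BadD where "BadD = (\<lambda>p. {D. \<not> (real (visit_count D t (fst p) (snd p)) < 1/2 * real l * d (fst p) (snd p)) \<and>
        f (fst p) (snd p) \<le> \<bar>?emp D (fst p) (snd p) - ?PE (fst p) (snd p)\<bar>})"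
  define Pos where "Pos = {p :: 's \<times> 'a. d (fst p) (snd p) > 0}"
  let ?M = "replicate_pmf l (episode d1 mu P H)"
  let ?Good = "{D. \<forall>s a. d s a > 0 \<longrightarrow>
                 0 \<le> Pexp P t s a (\<lambda>x. V x - Vin x) - g D s a \<and>
                 Pexp P t s a (\<lambda>x. V x - Vin x) - g D s a \<le> 8 * u * sqrt (L / (real l * d s a))}"
  have badp: "measure_pmf.prob ?M (BadD p) \<le> \<delta> / N" if p: "p \<in> Pos" for p
  proof -
    obtain s a where pe: "p = (s, a)" by (cases p)
    have dpos: "d s a > 0" using p pe by (simp add: Pos_def)
    have T: "1/2 * real l * d s a > 0" using dpos lpos by simp
    have f0: "f s a \<ge> 0" unfolding f_def using u Lpos lpos dpos by simp
    have "measure_pmf.prob ?M (BadD p) \<le> 2 * exp (- ((1/2 * real l * d s a) * (f s a)\<^sup>2) / (2 * (2*u)\<^sup>2))"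
      unfolding BadD_def pe fst_conv snd_conv Pexp_def
      using bad_bound[OF t, of "\<lambda>x. V x - Vin x" "2*u" "1/2 * real l * d s a" "f s a" l d1 mu P s a] assms(6) u T f0
      by (simp add: f_def Pexp_def)
    also have "- ((1/2 * real l * d s a) * (f s a)\<^sup>2) / (2 * (2*u)\<^sup>2) = - L"
    proof -
      have "(f s a)\<^sup>2 = 16 * u\<^sup>2 * (L / (real l * d s a))"
        unfolding f_def using Lpos lpos dpos by (simp add: power_mult_distrib)
      then show ?thesis using lpos dpos u by (simp add: field_simps power2_eq_square)
    qed
    finally show ?thesis using expL by simp
  qed
  have good: "UNIV - (\<Union>p\<in>Pos. BadD p) \<subseteq> ?Good"
  proof safe
    fix D s a assume nb: "D \<notin> (\<Union>p\<in>Pos. BadD p)" and dpos: "d s a > 0"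
    have f0: "f s a \<ge> 0" unfolding f_def using u Lpos lpos dpos by simp
    have f2: "8 * u * sqrt (L / (real l * d s a)) = 2 * f s a" by (simp add: f_def)
    have nb': "D \<notin> BadD (s, a)" using nb dpos by (auto simp: Pos_def)
    show "0 \<le> ?PE s a - g D s a" "?PE s a - g D s a \<le> 8 * u * sqrt (L / (real l * d s a))"
    proof (atomize(full), cases "real (visit_count D t s a) < 1/2 * real l * d s a")
      case True
      then show "0 \<le> ?PE s a - g D s a \<and> ?PE s a - g D s a \<le> 8 * u * sqrt (L / (real l * d s a))"
        using f0 f2 by (simp add: g_def)
    next
      case False
      then have "\<bar>?emp D s a - ?PE s a\<bar> < f s a" using nb' by (auto simp: BadD_def)
      then show "0 \<le> ?PE s a - g D s a \<and> ?PE s a - g D s a \<le> 8 * u * sqrt (L / (real l * d s a))"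
        using False f2 unfolding g_def by (simp only: if_False) (simp add: abs_less_iff)
    qed
  qed
  have G1: "measure_pmf.prob ?M ?Good \<ge> measure_pmf.prob ?M (UNIV - (\<Union>p\<in>Pos. BadD p))"
    by (rule measure_pmf.finite_measure_mono[OF good]) simp
  have G2: "measure_pmf.prob ?M (UNIV - (\<Union>p\<in>Pos. BadD p)) = 1 - measure_pmf.prob ?M (\<Union>p\<in>Pos. BadD p)"
    using measure_pmf.prob_compl[of "\<Union>p\<in>Pos. BadD p" ?M] by simp
  have "measure_pmf.prob ?M (\<Union>p\<in>Pos. BadD p) \<le> (\<Sum>p\<in>Pos. measure_pmf.prob ?M (BadD p))"
    by (rule measure_pmf.finite_measure_subadditive_finite) auto
  also have "\<dots> \<le> (\<Sum>p\<in>Pos. \<delta> / N)" by (rule sum_mono) (rule badp)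
  also have "\<dots> = real (card Pos) * (\<delta> / N)" by simp
  also have "\<dots> \<le> real (CARD('s) * CARD('a)) * (\<delta> / N)"
  proof (rule mult_right_mono)
    have "card Pos \<le> card (UNIV :: ('s \<times> 'a) set)" by (rule card_mono) auto
    then show "real (card Pos) \<le> real (CARD('s) * CARD('a))" by (metis UNIV_Times_UNIV card_cartesian_product of_nat_le_iff)
    show "0 \<le> \<delta> / N" using dl Npos by simp
  qed
  also have "\<dots> = \<delta> / real H" using Hpos by (simp add: N_def field_simps)
  finally have U: "measure_pmf.prob ?M (\<Union>p\<in>Pos. BadD p) \<le> \<delta> / real H" .
  show ?thesis using G1 G2 U by linarith
qed

end
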